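(* For linear codes $\mathcal{C}_1,\dots,\mathcal{C}_D\subseteq\mathbb{F}_q^n$ and the zero code $\mathbf{0}\subseteq\mathbb{F}_q^n$ we have $\rho(\mathbf{0},\mathcal{C}_1,\dots,\mathcal{C}_D)=\rho(\mathcal{C}_1,\dots,\mathcal{C}_D)$.
   Context: $\mathbb{F}_q$ is a finite field of characteristic 2. For a finite set $S$, $|v|$ is the Hamming weight of $v\in\mathbb{F}_q^S$ and $\|v\|=|v|/|S|$. For linear codes $\mathcal{A}_1,\dots,\mathcal{A}_E\subseteq\mathbb{F}_q^n$: $\mathcal{L}_i$ is the set of lines in $[n]^E$ parallel to the $i$-th axis; $\mathcal{A}^{(i)}=\{c\in\mathbb{F}_q^{[n]^E}:c|_\ell\in\mathcal{A}_i\ \forall\ell\in\mathcal{L}_i\}$; $\mathcal{A}_1\boxplus\cdots\boxplus\mathcal{A}_E=\sum_i\mathcal{A}^{(i)}$; $|x|_i$ is the number of $\ell\in\mathcal{L}_i$ with $x|_\ell\ne0$ and $\|x\|_i=|x|_i/n^{E-1}$. The collection is $\rho$-product-expanding if every $c\in\mathcal{A}_1\boxplus\cdots\boxplus\mathcal{A}_E$ can be written $c=\sum_ia_i$, $a_i\in\mathcal{A}^{(i)}$, with $\rho\sum_i\|a_i\|_i\le\|c\|$; $\rho(\mathcal{A}_1,\dots,\mathcal{A}_E)$ is the maximal such $\rho$. *)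

theory Defs
  imports Complex_Main "HOL-Library.Extended_Real"
begin

(* Words of F_q^n: functions nat => 'a, supported on {..<n}. *)
definition lin_code :: "nat \<Rightarrow> (nat \<Rightarrow> 'a::field) set \<Rightarrow> bool" where
  "lin_code n A \<longleftrightarrow>
     (\<forall>v\<in>A. \<forall>j. n \<le> j \<longrightarrow> v j = 0) \<and>
     (\<lambda>_. 0) \<in> A \<and>
     (\<forall>u\<in>A. \<forall>v\<in>A. (\<lambda>j. u j + v j) \<in> A) \<and>
     (\<forall>a. \<forall>v\<in>A. (\<lambda>j. a * v j) \<in> A)"

definition zero_code :: "(nat \<Rightarrow> 'a::zero) set" where
  "zero_code = {\<lambda>_. 0}"

definition grid :: "nat \<Rightarrow> nat \<Rightarrow> nat list set" where
  "grid n E = {xs. length xs = E \<and> (\<forall>k\<in>set xs. k < n)}"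

definition lines :: "nat \<Rightarrow> nat \<Rightarrow> nat \<Rightarrow> nat list set set" where
  "lines n E i = {{xs[i := j] | j. j < n} | xs. xs \<in> grid n E}"

(* Restriction of c to the line through xs parallel to axis i, identified with [n] *)
definition restr :: "nat \<Rightarrow> nat \<Rightarrow> (nat list \<Rightarrow> 'a::zero) \<Rightarrow> nat list \<Rightarrow> nat \<Rightarrow> 'a" where
  "restr n i c xs = (\<lambda>j. if j < n then c (xs[i := j]) else 0)"

definition words :: "nat \<Rightarrow> nat \<Rightarrow> (nat list \<Rightarrow> 'a::zero) set" where
  "words n E = {c. \<forall>x. x \<notin> grid n E \<longrightarrow> c x = 0}"

definition axis_code :: "nat \<Rightarrow> nat \<Rightarrow> nat \<Rightarrow> (nat \<Rightarrow> 'a::zero) set \<Rightarrow> (nat list \<Rightarrow> 'a) set" where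
  "axis_code n E i A = {c \<in> words n E. \<forall>xs\<in>grid n E. restr n i c xs \<in> A}"

definition rel_wt :: "nat \<Rightarrow> nat \<Rightarrow> (nat list \<Rightarrow> 'a::zero) \<Rightarrow> real" where
  "rel_wt n E c = real (card {x \<in> grid n E. c x \<noteq> 0}) / real (card (grid n E))"

definition line_wt :: "nat \<Rightarrow> nat \<Rightarrow> nat \<Rightarrow> (nat list \<Rightarrow> 'a::zero) \<Rightarrow> real" where
  "line_wt n E i c = real (card {l \<in> lines n E i. \<exists>x\<in>l. c x \<noteq> 0}) / real n ^ (E - 1)"

(* membership in A_1 \<boxplus> ... \<boxplus> A_E, codes given as a list As with E = length As *)
definition sum_code :: "nat \<Rightarrow> (nat \<Rightarrow> 'a::field) set list \<Rightarrow> (nat list \<Rightarrow> 'a) set" where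
  "sum_code n As = {c. \<exists>a. (\<forall>i<length As. a i \<in> axis_code n (length As) i (As ! i))
                             \<and> c = (\<lambda>x. \<Sum>i<length As. a i x)}"

definition product_expanding :: "nat \<Rightarrow> (nat \<Rightarrow> 'a::field) set list \<Rightarrow> real \<Rightarrow> bool" where
  "product_expanding n As r \<longleftrightarrow>
     (\<forall>c\<in>sum_code n As. \<exists>a. (\<forall>i<length As. a i \<in> axis_code n (length As) i (As ! i))
         \<and> c = (\<lambda>x. \<Sum>i<length As. a i x)
         \<and> r * (\<Sum>i<length As. line_wt n (length As) i (a i)) \<le> rel_wt n (length As) c)"

(* maximal rho (as a supremum in the extended reals; +infinity in degenerate cases) *)
definition rho :: "nat \<Rightarrow> (nat \<Rightarrow> 'a::field) set list \<Rightarrow> ereal" where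
  "rho n As = Sup {ereal r | r. product_expanding n As r}"

end

theory Submission imports Defs begin

definition sl :: "nat \<Rightarrow> nat \<Rightarrow> (nat list \<Rightarrow> 'a::zero) \<Rightarrow> nat \<Rightarrow> nat list \<Rightarrow> 'a" where
  "sl n D f t = (\<lambda>y. if y \<in> grid n D then f (t#y) else 0)"

definition glue :: "nat \<Rightarrow> nat \<Rightarrow> (nat \<Rightarrow> nat list \<Rightarrow> 'a::zero) \<Rightarrow> nat list \<Rightarrow> 'a" where
  "glue n D g = (\<lambda>x. if x \<in> grid n (Suc D) then g (hd x) (tl x) else 0)"

lemma grid_Cons: "(t#y) \<in> grid n (Suc D) \<longleftrightarrow> t < n \<and> y \<in> grid n D"
  by (auto simp: grid_def)

lemma grid_Suc_mem: "x \<in> grid n (Suc D) \<longleftrightarrow> (\<exists>t y. x = t#y \<and> t < n \<and> y \<in> grid n D)"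
  by (cases x) (auto simp: grid_def)

lemma grid_Suc_eq: "grid n (Suc D) = (\<lambda>(t,y). t#y) ` ({..<n} \<times> grid n D)"
  by (auto simp: grid_Suc_mem image_iff)

lemma grid_0: "grid n 0 = {[]}"
  by (auto simp: grid_def)

lemma finite_grid: "finite (grid n D)"
  by (induction D) (auto simp: grid_0 grid_Suc_eq)

lemma inj_Cons_pair: "inj_on (\<lambda>(t,y). t#y) A"
  by (auto simp: inj_on_def)

lemma card_grid: "card (grid n D) = n ^ D"
proof (induction D)
  case 0 then show ?case by (simp add: grid_0)
next
  case (Suc D)
  have "card (grid n (Suc D)) = card ({..<n} \<times> grid n D)"
    unfolding grid_Suc_eq by (rule card_image[OF inj_Cons_pair])
  also have "\<dots> = n * n ^ D" using Suc by (simp add: card_cartesian_product)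
  finally show ?case by simp
qed

lemma grid_n0: "0 < E \<Longrightarrow> grid 0 E = {}"
  by (cases E) (auto simp: grid_Suc_mem)

lemma lines_n0: "0 < E \<Longrightarrow> lines 0 E i = {}"
  by (simp add: lines_def grid_n0)

lemma line_wt_n0: "0 < E \<Longrightarrow> line_wt 0 E i f = 0"
  by (simp add: line_wt_def lines_n0)

lemma line_wt_zero: "line_wt n E i (\<lambda>_. 0) = 0"
  by (simp add: line_wt_def)

lemma rel_wt_nonneg: "0 \<le> rel_wt n E f"
  by (simp add: rel_wt_def)

lemma update_grid: "y \<in> grid n D \<Longrightarrow> j < n \<Longrightarrow> y[i := j] \<in> grid n D"
  using set_update_subset_insert[of y i j] by (auto simp: grid_def)

lemma sl_words: "sl n D f t \<in> words n D"
  by (simp add: sl_def words_def)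

lemma glue_words: "glue n D g \<in> words n (Suc D)"
  by (simp add: glue_def words_def)

lemma sl_glue: "t < n \<Longrightarrow> g t \<in> words n D \<Longrightarrow> sl n D (glue n D g) t = g t"
  by (auto simp: sl_def glue_def grid_Cons words_def)

lemma glue_Cons: "t < n \<Longrightarrow> y \<in> grid n D \<Longrightarrow> glue n D g (t#y) = g t y"
  by (simp add: glue_def grid_Cons)

lemma restr_sl: "y \<in> grid n D \<Longrightarrow> restr n i (sl n D f t) y = restr n (Suc i) f (t#y)"
  by (auto simp: restr_def sl_def update_grid)

lemma axis_Suc:
  assumes "f \<in> words n (Suc D)"
  shows "f \<in> axis_code n (Suc D) (Suc i) A \<longleftrightarrow> (\<forall>t<n. sl n D f t \<in> axis_code n D i A)"
proof
  assume h: "f \<in> axis_code n (Suc D) (Suc i) A"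
  show "\<forall>t<n. sl n D f t \<in> axis_code n D i A"
  proof (intro allI impI)
    fix t assume t: "t < n"
    have "\<forall>y\<in>grid n D. restr n i (sl n D f t) y \<in> A"
      using h t by (auto simp: axis_code_def restr_sl grid_Cons)
    then show "sl n D f t \<in> axis_code n D i A" by (simp add: axis_code_def sl_words)
  qed
next
  assume h: "\<forall>t<n. sl n D f t \<in> axis_code n D i A"
  have "\<forall>xs\<in>grid n (Suc D). restr n (Suc i) f xs \<in> A"
  proof
    fix xs assume "xs \<in> grid n (Suc D)"
    then obtain t y where xs: "xs = t#y" "t < n" "y \<in> grid n D" by (auto simp: grid_Suc_mem)
    then show "restr n (Suc i) f xs \<in> A" using h by (auto simp: axis_code_def restr_sl[symmetric])
  qed
  then show "f \<in> axis_code n (Suc D) (Suc i) A" using assms by (simp add: axis_code_def)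
qed

lemma zero_axis:
  assumes "f \<in> axis_code n (Suc D) 0 zero_code"
  shows "f = (\<lambda>_. 0)"
proof
  fix x
  show "f x = 0"
  proof (cases "x \<in> grid n (Suc D)")
    case False then show ?thesis using assms by (simp add: axis_code_def words_def)
  next
    case True
    then obtain t y where xs: "x = t#y" "t < n" "y \<in> grid n D" by (auto simp: grid_Suc_mem)
    have "restr n 0 f x = (\<lambda>_. 0)" using assms True by (simp add: axis_code_def zero_code_def)
    then have "restr n 0 f x t = 0" by simp
    then show ?thesis using xs by (simp add: restr_def)
  qed
qed

lemma zero_in_axis: "(\<lambda>_. 0) \<in> axis_code n E 0 zero_code"
  by (simp add: axis_code_def zero_code_def words_def restr_def)

lemma words_sum: "(\<And>i. i < k \<Longrightarrow> a i \<in> words n E) \<Longrightarrow> (\<lambda>x. \<Sum>i<k. a i x) \<in> words n E"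
  by (simp add: words_def)

lemma rel_wt_Suc: "rel_wt n (Suc D) f * n = (\<Sum>t<n. rel_wt n D (sl n D f t))"
proof -
  let ?S = "\<lambda>t. {y \<in> grid n D. f (t#y) \<noteq> 0}"
  have eq: "{x \<in> grid n (Suc D). f x \<noteq> 0} = (\<lambda>(t,y). t#y) ` (SIGMA t:{..<n}. ?S t)"
    by (auto simp: grid_Suc_mem image_iff)
  have "card {x \<in> grid n (Suc D). f x \<noteq> 0} = (\<Sum>t<n. card (?S t))"
    unfolding eq by (simp add: card_image[OF inj_Cons_pair] card_SigmaI finite_grid)
  moreover have "\<And>t. {y \<in> grid n D. sl n D f t y \<noteq> 0} = ?S t" by (auto simp: sl_def)
  ultimately show ?thesis
    by (cases "n = 0") (simp_all add: rel_wt_def card_grid sum_divide_distrib[symmetric])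
qed

lemma lines_sub: "l \<in> lines n D i \<Longrightarrow> l \<subseteq> grid n D"
  by (auto simp: lines_def update_grid)

lemma finite_lines: "finite (lines n D i)"
proof -
  have "lines n D i = (\<lambda>xs. {xs[i := j] | j. j < n}) ` grid n D" by (auto simp: lines_def)
  then show ?thesis using finite_grid by simp
qed

lemma lines_nonempty: "0 < n \<Longrightarrow> l \<in> lines n D i \<Longrightarrow> l \<noteq> {}"
  by (auto simp: lines_def)

lemma line_Cons: "{(t#y)[Suc i := j] | j. j < n} = Cons t ` {y[i := j] | j. j < n}"
  by auto

lemma lines_Suc: "lines n (Suc D) (Suc i) = (\<lambda>(t,l). Cons t ` l) ` ({..<n} \<times> lines n D i)"
proof
  show "lines n (Suc D) (Suc i) \<subseteq> (\<lambda>(t,l). Cons t ` l) ` ({..<n} \<times> lines n D i)"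
  proof
    fix L assume "L \<in> lines n (Suc D) (Suc i)"
    then obtain xs where xs: "xs \<in> grid n (Suc D)" "L = {xs[Suc i := j] | j. j < n}"
      by (auto simp: lines_def)
    then obtain t y where ty: "xs = t#y" "t < n" "y \<in> grid n D" by (auto simp: grid_Suc_mem)
    have "{y[i := j] | j. j < n} \<in> lines n D i" using ty by (auto simp: lines_def)
    moreover have "L = Cons t ` {y[i := j] | j. j < n}" using xs ty line_Cons by simp
    ultimately show "L \<in> (\<lambda>(t,l). Cons t ` l) ` ({..<n} \<times> lines n D i)"
      using ty by (auto simp: image_iff)
  qed
next
  show "(\<lambda>(t,l). Cons t ` l) ` ({..<n} \<times> lines n D i) \<subseteq> lines n (Suc D) (Suc i)"
  proof
    fix L assume "L \<in> (\<lambda>(t,l). Cons t ` l) ` ({..<n} \<times> lines n D i)"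
    then obtain t l where tl: "t < n" "l \<in> lines n D i" "L = Cons t ` l" by auto
    then obtain y where y: "y \<in> grid n D" "l = {y[i := j] | j. j < n}" by (auto simp: lines_def)
    have "L = {(t#y)[Suc i := j] | j. j < n}" using tl y by (simp only: line_Cons)
    moreover have "t#y \<in> grid n (Suc D)" using tl y by (simp add: grid_Cons)
    ultimately show "L \<in> lines n (Suc D) (Suc i)" by (auto simp: lines_def)
  qed
qed

lemma inj_lines: "0 < n \<Longrightarrow> inj_on (\<lambda>(t,l). Cons t ` l) ({..<n} \<times> lines n D i)"
proof (rule inj_onI)
  fix p q assume n: "0 < n" and p: "p \<in> {..<n} \<times> lines n D i" and q: "q \<in> {..<n} \<times> lines n D i"
    and e: "(\<lambda>(t,l). Cons t ` l) p = (\<lambda>(t,l). Cons t ` l) q"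
  obtain t l where pp: "p = (t,l)" by force
  obtain t' l' where qq: "q = (t',l')" by force
  have l: "l \<in> lines n D i" using p pp by simp
  have h: "Cons t ` l = Cons t' ` l'" using e pp qq by simp
  obtain y where y: "y \<in> l" using lines_nonempty[OF n l] by blast
  have "t#y \<in> Cons t' ` l'" using h y by blast
  then have tt: "t = t'" by blast
  have "l = l'" using h unfolding tt by (simp add: inj_image_eq_iff)
  then show "p = q" using pp qq tt by simp
qed

lemma img_filter:
  assumes "\<And>t l. t \<in> A \<Longrightarrow> l \<in> B \<Longrightarrow> P (F (t,l)) = Q t l"
  shows "{L \<in> F ` (A \<times> B). P L} = F ` (SIGMA t:A. {l \<in> B. Q t l})"
proof (rule set_eqI, rule iffI)
  fix L assume "L \<in> {L \<in> F ` (A \<times> B). P L}"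
  then obtain t l where "t \<in> A" "l \<in> B" "L = F (t,l)" "P L" by auto
  then show "L \<in> F ` (SIGMA t:A. {l \<in> B. Q t l})" using assms by auto
next
  fix L assume "L \<in> F ` (SIGMA t:A. {l \<in> B. Q t l})"
  then obtain t l where "t \<in> A" "l \<in> B" "L = F (t,l)" "Q t l" by auto
  then show "L \<in> {L \<in> F ` (A \<times> B). P L}" using assms by auto
qed

lemma line_wt_Suc:
  assumes "0 < D"
  shows "line_wt n (Suc D) (Suc i) f * n = (\<Sum>t<n. line_wt n D i (sl n D f t))"
proof (cases "n = 0")
  case True then show ?thesis by simp
next
  case False
  let ?S = "\<lambda>t. {l \<in> lines n D i. \<exists>y\<in>l. sl n D f t y \<noteq> 0}"
  have eq: "{L \<in> lines n (Suc D) (Suc i). \<exists>x\<in>L. f x \<noteq> 0} = (\<lambda>(t,l). Cons t ` l) ` (SIGMA t:{..<n}. ?S t)"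
  proof -
    have "\<And>t l. t < n \<Longrightarrow> l \<in> lines n D i \<Longrightarrow> (\<exists>x\<in>Cons t ` l. f x \<noteq> 0) \<longleftrightarrow> (\<exists>y\<in>l. sl n D f t y \<noteq> 0)"
      using lines_sub by (fastforce simp: sl_def)
    then show ?thesis unfolding lines_Suc by (intro img_filter) auto
  qed
  have inj: "inj_on (\<lambda>(t,l). Cons t ` l) (SIGMA t:{..<n}. ?S t)"
    by (rule inj_on_subset[OF inj_lines]) (use False in auto)
  have "card {L \<in> lines n (Suc D) (Suc i). \<exists>x\<in>L. f x \<noteq> 0} = (\<Sum>t<n. card (?S t))"
    unfolding eq by (simp add: card_image[OF inj] card_SigmaI finite_lines)
  moreover have "real n ^ (Suc D - 1) = real n * real n ^ (D - 1)" using assms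
    by (cases D) auto
  ultimately show ?thesis using False
    by (simp add: line_wt_def sum_divide_distrib[symmetric])
qed

lemma exists_le:
  fixes g :: "nat \<Rightarrow> real"
  assumes "0 < n" "(\<Sum>t<n. g t) \<le> (\<Sum>t<n. h)"
  shows "\<exists>t<n. g t \<le> h"
proof (rule ccontr)
  assume "\<not> ?thesis"
  then have "\<And>t. t \<in> {..<n} \<Longrightarrow> h < g t" by auto
  then have "(\<Sum>t<n. h) < (\<Sum>t<n. g t)" using assms(1) by (intro sum_strict_mono) auto
  then show False using assms(2) by simp
qed

lemma dirA:
  assumes pe: "product_expanding n Cs r"
  shows "product_expanding n (zero_code # Cs) r"
  unfolding product_expanding_def
proof
  define D where "D = length Cs"
  fix c assume "c \<in> sum_code n (zero_code # Cs)"
  then obtain a where a: "\<forall>i<Suc D. a i \<in> axis_code n (Suc D) i ((zero_code # Cs) ! i)"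
    and c_eq: "c = (\<lambda>x. \<Sum>i<Suc D. a i x)"
    by (auto simp: sum_code_def D_def)
  have a0: "a 0 = (\<lambda>_. 0)" using a zero_axis by force
  have aS: "\<And>i. i < D \<Longrightarrow> a (Suc i) \<in> axis_code n (Suc D) (Suc i) (Cs ! i)" using a by auto
  have aSw: "\<And>i. i < D \<Longrightarrow> a (Suc i) \<in> words n (Suc D)" using aS by (auto simp: axis_code_def)
  have c_eq2: "c = (\<lambda>x. \<Sum>i<D. a (Suc i) x)" unfolding c_eq by (simp add: sum.lessThan_Suc_shift a0 del: sum.lessThan_Suc)
  have cw: "c \<in> words n (Suc D)" unfolding c_eq2 using aSw by (rule words_sum)
  have slc: "\<And>t. sl n D c t = (\<lambda>y. \<Sum>i<D. sl n D (a (Suc i)) t y)"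
    unfolding c_eq2 by (auto simp: sl_def)
  have "\<forall>t\<in>{..<n}. \<exists>b. (\<forall>i<D. b i \<in> axis_code n D i (Cs ! i)) \<and> sl n D c t = (\<lambda>x. \<Sum>i<D. b i x)
      \<and> r * (\<Sum>i<D. line_wt n D i (b i)) \<le> rel_wt n D (sl n D c t)"
  proof
    fix t assume t: "t \<in> {..<n}"
    have "\<forall>i<D. sl n D (a (Suc i)) t \<in> axis_code n D i (Cs ! i)"
      using t aS aSw axis_Suc by blast
    then have sc: "sl n D c t \<in> sum_code n Cs"
      unfolding sum_code_def D_def[symmetric] using slc[of t]
      by (intro CollectI exI[of _ "\<lambda>i. sl n D (a (Suc i)) t"]) simp
    show "\<exists>b. (\<forall>i<D. b i \<in> axis_code n D i (Cs ! i)) \<and> sl n D c t = (\<lambda>x. \<Sum>i<D. b i x)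
      \<and> r * (\<Sum>i<D. line_wt n D i (b i)) \<le> rel_wt n D (sl n D c t)"
      using pe[unfolded product_expanding_def, rule_format, OF sc] unfolding D_def .
  qed
  then obtain B where B': "\<forall>t\<in>{..<n}. (\<forall>i<D. B t i \<in> axis_code n D i (Cs ! i)) \<and> sl n D c t = (\<lambda>x. \<Sum>i<D. B t i x)
      \<and> r * (\<Sum>i<D. line_wt n D i (B t i)) \<le> rel_wt n D (sl n D c t)"
    by (rule bchoice[THEN exE])
  have B1: "\<And>t i. t < n \<Longrightarrow> i < D \<Longrightarrow> B t i \<in> axis_code n D i (Cs ! i)"
    using B' by blast
  have B2: "\<And>t. t < n \<Longrightarrow> sl n D c t = (\<lambda>x. \<Sum>i<D. B t i x)"
    using B' by blast
  have B3: "\<And>t. t < n \<Longrightarrow> r * (\<Sum>i<D. line_wt n D i (B t i)) \<le> rel_wt n D (sl n D c t)"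
    using B' by blast
  have Bw: "\<And>t i. t < n \<Longrightarrow> i < D \<Longrightarrow> B t i \<in> words n D" using B1 by (auto simp: axis_code_def)
  define a' where "a' = (\<lambda>i. if i = 0 then (\<lambda>_. 0) else glue n D (\<lambda>t. B t (i - 1)))"
  have a'0: "a' 0 = (\<lambda>_. 0)" by (simp add: a'_def)
  have a'S: "\<And>i. a' (Suc i) = glue n D (\<lambda>t. B t i)" by (simp add: a'_def)
  have sl_a': "\<And>t i. t < n \<Longrightarrow> i < D \<Longrightarrow> sl n D (a' (Suc i)) t = B t i"
    unfolding a'S using Bw by (simp add: sl_glue)
  have mem: "\<forall>i<Suc D. a' i \<in> axis_code n (Suc D) i ((zero_code # Cs) ! i)"
  proof (intro allI impI)
    fix i assume i: "i < Suc D"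
    show "a' i \<in> axis_code n (Suc D) i ((zero_code # Cs) ! i)"
    proof (cases i)
      case 0 then show ?thesis by (simp add: a'0 zero_in_axis)
    next
      case (Suc j)
      then have j: "j < D" using i by simp
      have "a' (Suc j) \<in> axis_code n (Suc D) (Suc j) (Cs ! j)"
        unfolding a'S axis_Suc[OF glue_words]
      proof (intro allI impI)
        fix t assume t: "t < n"
        have "sl n D (glue n D (\<lambda>t. B t j)) t = B t j" using sl_glue[of t n "\<lambda>t. B t j"] Bw[OF t j] t by simp
        then show "sl n D (glue n D (\<lambda>t. B t j)) t \<in> axis_code n D j (Cs ! j)" using B1[OF t j] by simp
      qed
      then show ?thesis using Suc by simp
    qed
  qed
  have ceq': "c = (\<lambda>x. \<Sum>i<Suc D. a' i x)"
  proof
    fix x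
    show "c x = (\<Sum>i<Suc D. a' i x)"
    proof (cases "x \<in> grid n (Suc D)")
      case False
      then show ?thesis using cw by (simp add: words_def sum.lessThan_Suc_shift a'0 a'S glue_def del: sum.lessThan_Suc)
    next
      case True
      then obtain t y where ty: "x = t#y" "t < n" "y \<in> grid n D" by (auto simp: grid_Suc_mem)
      have "c x = sl n D c t y" using ty by (simp add: sl_def)
      also have "\<dots> = (\<Sum>i<D. B t i y)" using B2 ty by simp
      also have "\<dots> = (\<Sum>i<D. a' (Suc i) x)" using ty by (simp add: a'S glue_Cons)
      also have "\<dots> = (\<Sum>i<Suc D. a' i x)" by (simp add: sum.lessThan_Suc_shift a'0 del: sum.lessThan_Suc)
      finally show ?thesis .
    qed
  qed
  have lw: "(\<Sum>i<Suc D. line_wt n (Suc D) i (a' i)) = (\<Sum>i<D. line_wt n (Suc D) (Suc i) (a' (Suc i)))"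
    by (simp add: sum.lessThan_Suc_shift a'0 line_wt_zero del: sum.lessThan_Suc)
  have ineq: "r * (\<Sum>i<Suc D. line_wt n (Suc D) i (a' i)) \<le> rel_wt n (Suc D) c"
  proof (cases "n = 0")
    case True
    then show ?thesis unfolding lw by (simp add: line_wt_n0 rel_wt_nonneg)
  next
    case False
    have "r * (\<Sum>i<Suc D. line_wt n (Suc D) i (a' i)) * n
        = r * (\<Sum>i<D. line_wt n (Suc D) (Suc i) (a' (Suc i)) * n)"
      unfolding lw by (simp add: sum_distrib_right mult.assoc)
    also have "\<dots> = r * (\<Sum>i<D. \<Sum>t<n. line_wt n D i (B t i))"
      by (intro arg_cong[where f="\<lambda>x. r * x"] sum.cong refl)
         (simp add: line_wt_Suc sl_a')
    also have "\<dots> = (\<Sum>t<n. r * (\<Sum>i<D. line_wt n D i (B t i)))"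
      by (simp add: sum_distrib_left sum.swap[of _ "{..<D}"])
    also have "\<dots> \<le> (\<Sum>t<n. rel_wt n D (sl n D c t))"
      using B3 by (intro sum_mono) auto
    also have "\<dots> = rel_wt n (Suc D) c * n" by (simp add: rel_wt_Suc)
    finally show ?thesis using False by simp
  qed
  show "\<exists>a. (\<forall>i<length (zero_code # Cs). a i \<in> axis_code n (length (zero_code # Cs)) i ((zero_code # Cs) ! i)) \<and>
             c = (\<lambda>x. \<Sum>i<length (zero_code # Cs). a i x) \<and>
             r * (\<Sum>i<length (zero_code # Cs). line_wt n (length (zero_code # Cs)) i (a i))
             \<le> rel_wt n (length (zero_code # Cs)) c"
    using mem ceq' ineq unfolding D_def by auto
qed

lemma dirB:
  assumes pe: "product_expanding n (zero_code # Cs) r"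
  shows "product_expanding n Cs r"
  unfolding product_expanding_def
proof
  define D where "D = length Cs"
  fix c' assume "c' \<in> sum_code n Cs"
  then obtain a where a: "\<forall>i<D. a i \<in> axis_code n D i (Cs ! i)"
    and c_eq: "c' = (\<lambda>x. \<Sum>i<D. a i x)"
    by (auto simp: sum_code_def D_def)
  have aw: "\<And>i. i < D \<Longrightarrow> a i \<in> words n D" using a by (auto simp: axis_code_def)
  have cw: "c' \<in> words n D" unfolding c_eq using aw by (rule words_sum)
  have "\<exists>b. (\<forall>i<D. b i \<in> axis_code n D i (Cs ! i)) \<and> c' = (\<lambda>x. \<Sum>i<D. b i x)
      \<and> r * (\<Sum>i<D. line_wt n D i (b i)) \<le> rel_wt n D c'"
  proof (cases "n = 0")
    case True
    have "(\<Sum>i<D. line_wt n D i (a i)) = 0"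
      using True by (intro sum.neutral) (auto simp: line_wt_n0)
    then have "r * (\<Sum>i<D. line_wt n D i (a i)) \<le> rel_wt n D c'" using rel_wt_nonneg by simp
    then show ?thesis using a c_eq by blast
  next
    case False
    define c where "c = glue n D (\<lambda>t. c')"
    define A where "A = (\<lambda>i. if i = 0 then (\<lambda>_. 0) else glue n D (\<lambda>t. a (i - 1)))"
    have A0: "A 0 = (\<lambda>_. 0)" by (simp add: A_def)
    have AS: "\<And>i. A (Suc i) = glue n D (\<lambda>t. a i)" by (simp add: A_def)
    have memA: "\<forall>i<Suc D. A i \<in> axis_code n (Suc D) i ((zero_code # Cs) ! i)"
    proof (intro allI impI)
      fix i assume i: "i < Suc D"
      show "A i \<in> axis_code n (Suc D) i ((zero_code # Cs) ! i)"
      proof (cases i)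
        case 0 then show ?thesis by (simp add: A0 zero_in_axis)
      next
        case (Suc j)
        then have j: "j < D" using i by simp
        have "A (Suc j) \<in> axis_code n (Suc D) (Suc j) (Cs ! j)"
          unfolding AS axis_Suc[OF glue_words]
        proof (intro allI impI)
          fix t assume t: "t < n"
          have "sl n D (glue n D (\<lambda>t. a j)) t = a j" using sl_glue[of t n "\<lambda>t. a j"] aw[OF j] t by simp
          then show "sl n D (glue n D (\<lambda>t. a j)) t \<in> axis_code n D j (Cs ! j)" using a j by simp
        qed
        then show ?thesis using Suc by simp
      qed
    qed
    have ceq: "c = (\<lambda>x. \<Sum>i<Suc D. A i x)"
    proof
      fix x
      show "c x = (\<Sum>i<Suc D. A i x)"
      proof (cases "x \<in> grid n (Suc D)")
        case False
        then show ?thesis by (simp add: c_def sum.lessThan_Suc_shift A0 AS glue_def del: sum.lessThan_Suc)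
      next
        case True
        then obtain t y where ty: "x = t#y" "t < n" "y \<in> grid n D" by (auto simp: grid_Suc_mem)
        have "c x = c' y" using ty by (simp add: c_def glue_Cons)
        also have "\<dots> = (\<Sum>i<D. a i y)" using c_eq by simp
        also have "\<dots> = (\<Sum>i<D. A (Suc i) x)" using ty by (simp add: AS glue_Cons)
        also have "\<dots> = (\<Sum>i<Suc D. A i x)" by (simp add: sum.lessThan_Suc_shift A0 del: sum.lessThan_Suc)
        finally show ?thesis .
      qed
    qed
    have L: "length (zero_code # Cs) = Suc D" by (simp add: D_def)
    have csc: "c \<in> sum_code n (zero_code # Cs)"
      unfolding sum_code_def L using memA ceq by blast
    obtain a'' where a'': "\<forall>i<Suc D. a'' i \<in> axis_code n (Suc D) i ((zero_code # Cs) ! i)"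
      and ceq'': "c = (\<lambda>x. \<Sum>i<Suc D. a'' i x)"
      and ine: "r * (\<Sum>i<Suc D. line_wt n (Suc D) i (a'' i)) \<le> rel_wt n (Suc D) c"
      using pe[unfolded product_expanding_def L, rule_format, OF csc] by blast
    have a0: "a'' 0 = (\<lambda>_. 0)" using a'' zero_axis by force
    have aS: "\<And>i. i < D \<Longrightarrow> a'' (Suc i) \<in> axis_code n (Suc D) (Suc i) (Cs ! i)" using a'' by auto
    have aSw: "\<And>i. i < D \<Longrightarrow> a'' (Suc i) \<in> words n (Suc D)" using aS by (auto simp: axis_code_def)
    have c_eq2: "c = (\<lambda>x. \<Sum>i<D. a'' (Suc i) x)" unfolding ceq'' by (simp add: sum.lessThan_Suc_shift a0 del: sum.lessThan_Suc)
    have slc: "\<And>t. t < n \<Longrightarrow> sl n D c t = c'"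
      unfolding c_def using cw by (simp add: sl_glue)
    have slc2: "\<And>t. sl n D c t = (\<lambda>y. \<Sum>i<D. sl n D (a'' (Suc i)) t y)"
      unfolding c_eq2 by (auto simp: sl_def)
    have lw: "(\<Sum>i<Suc D. line_wt n (Suc D) i (a'' i)) = (\<Sum>i<D. line_wt n (Suc D) (Suc i) (a'' (Suc i)))"
      by (simp add: sum.lessThan_Suc_shift a0 line_wt_zero del: sum.lessThan_Suc)
    have "(\<Sum>t<n. r * (\<Sum>i<D. line_wt n D i (sl n D (a'' (Suc i)) t)))
        = r * (\<Sum>i<D. \<Sum>t<n. line_wt n D i (sl n D (a'' (Suc i)) t))"
      by (simp add: sum_distrib_left sum.swap[of _ "{..<D}"])
    also have "\<dots> = r * (\<Sum>i<D. line_wt n (Suc D) (Suc i) (a'' (Suc i)) * n)"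
      by (intro arg_cong[where f="\<lambda>x. r * x"] sum.cong refl) (simp add: line_wt_Suc)
    also have "\<dots> = r * (\<Sum>i<Suc D. line_wt n (Suc D) i (a'' i)) * n"
      unfolding lw by (simp add: sum_distrib_right mult.assoc)
    also have "\<dots> \<le> rel_wt n (Suc D) c * n" using ine by (simp add: mult_right_mono)
    also have "\<dots> = (\<Sum>t<n. rel_wt n D (sl n D c t))" by (simp add: rel_wt_Suc)
    also have "\<dots> = (\<Sum>t<n. rel_wt n D c')" using slc by simp
    finally obtain t where t: "t < n"
      and tle: "r * (\<Sum>i<D. line_wt n D i (sl n D (a'' (Suc i)) t)) \<le> rel_wt n D c'"
      using exists_le[of n] False by blast
    have m: "\<forall>i<D. sl n D (a'' (Suc i)) t \<in> axis_code n D i (Cs ! i)"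
      using aS aSw axis_Suc t by blast
    have e: "c' = (\<lambda>x. \<Sum>i<D. sl n D (a'' (Suc i)) t x)"
      using slc[OF t, symmetric] slc2[of t] by (rule trans)
    show ?thesis by (intro exI[of _ "\<lambda>i. sl n D (a'' (Suc i)) t"] conjI m e tle)
  qed
  then show "\<exists>a. (\<forall>i<length Cs. a i \<in> axis_code n (length Cs) i (Cs ! i)) \<and>
             c' = (\<lambda>x. \<Sum>i<length Cs. a i x) \<and>
             r * (\<Sum>i<length Cs. line_wt n (length Cs) i (a i)) \<le> rel_wt n (length Cs) c'"
    unfolding D_def .
qed

theorem lemma3:
  fixes n :: nat and Cs :: "(nat \<Rightarrow> 'a::{field,finite}) set list"
  assumes "CHAR('a) = 2"
    and "\<forall>C\<in>set Cs. lin_code n C"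
  shows "rho n (zero_code # Cs) = rho n Cs"
proof -
  have "\<And>r. product_expanding n (zero_code # Cs) r = product_expanding n Cs r"
    using dirA dirB by blast
  then show ?thesis unfolding rho_def by simp
qed

end
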